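(* Let $a>0$ and let $k$ be a non-negative integer. Let $\psi(t)=\sum_{n\ge1}e^{-\pi n^2 t/a}$, $\phi(t)=\sum_{n\ge1}e^{-\pi n^2 a t}$, and \[\epsilon_{2k+1}(a)=\frac{1}{4\pi a}\int_1^\infty \{a^{1/2}\phi(t)-\psi(t)\}\,\frac{(t-1)^{2k+1}}{(1+t)^{2k+5/2}}\,dt.\] Let $\Psi(\tau)=\sum_{n\ge1}e^{-\pi n^2\tau}$ for $\tau>0$ and $E_{2k+1}(a)=a^{1/4}\Psi(a)\,U(2k+2,\tfrac12,2\pi a)$. Then \[|\epsilon_{2k+1}(a)|<\mathcal{B}_{2k+1}(a):=\frac{a^{-3/4}(2k+1)!}{4\sqrt{2}\,\pi}\{E_{2k+1}(a)+E_{2k+1}(1/a)\}.\]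
   Context: $U(\alpha,b,z)$ denotes the confluent hypergeometric function of the second kind (Tricomi's function), which for $\alpha>0$, $\Re z>0$ has the representation $U(\alpha,b,z)=\frac{1}{\Gamma(\alpha)}\int_0^\infty e^{-zt}t^{\alpha-1}(1+t)^{b-\alpha-1}dt$. *)

theory Defs
  imports "HOL-Analysis.Analysis"
begin

definition theta_Psi :: "real \<Rightarrow> real" where
  "theta_Psi \<tau> = (\<Sum>n. exp (- pi * (real (Suc n))^2 * \<tau>))"

text \<open>Tricomi's confluent hypergeometric function U(alpha,b,z), via its integral
  representation (valid for alpha > 0, z > 0, the only case used).\<close>
definition tricomiU :: "real \<Rightarrow> real \<Rightarrow> real \<Rightarrow> real" where
  "tricomiU \<alpha> b z = (1 / Gamma \<alpha>) *
     (LBINT t:{0<..}. exp (- z * t) * t powr (\<alpha> - 1) * (1 + t) powr (b - \<alpha> - 1))"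

definition eps_odd :: "nat \<Rightarrow> real \<Rightarrow> real" where
  "eps_odd k a = 1 / (4 * pi * a) *
     (LBINT t:{1..}. (sqrt a * theta_Psi (a * t) - theta_Psi (t / a)) *
        ((t - 1) ^ (2*k+1) / (1 + t) powr (real (2*k) + 5/2)))"

definition E_odd :: "nat \<Rightarrow> real \<Rightarrow> real" where
  "E_odd k a = a powr (1/4) * theta_Psi a * tricomiU (real (2*k+2)) (1/2) (2 * pi * a)"

definition B_odd :: "nat \<Rightarrow> real \<Rightarrow> real" where
  "B_odd k a = a powr (-3/4) * fact (2*k+1) / (4 * sqrt 2 * pi) * (E_odd k a + E_odd k (1/a))"

end

theory Submission
  imports Defs
begin


lemma Psi_summable:
  assumes "\<tau> > 0"
  shows "summable (\<lambda>n. exp (- pi * (real (Suc n))^2 * \<tau>))"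
proof (rule summable_comparison_test')
  have "summable (\<lambda>n. exp (-pi*\<tau>) * exp (-pi*\<tau>) ^ n)"
    using assms by (intro summable_mult summable_geometric) auto
  then show "summable (\<lambda>n. exp (-pi*\<tau>) ^ Suc n)" by simp
  fix n :: nat
  have "real (Suc n) \<le> (real (Suc n))^2" by (simp add: power2_eq_square)
  then have "- pi * (real (Suc n))^2 * \<tau> \<le> real (Suc n) * (-pi*\<tau>)"
    using assms by (simp add: mult_right_mono)
  then show "norm (exp (- pi * (real (Suc n))^2 * \<tau>)) \<le> exp (-pi*\<tau>) ^ Suc n"
    unfolding exp_of_nat_mult[symmetric] by simp
qed

lemma Psi_pos: "\<tau> > 0 \<Longrightarrow> theta_Psi \<tau> > 0"
  unfolding theta_Psi_def by (rule suminf_pos[OF Psi_summable]) auto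

lemma Psi_bound:
  assumes c: "c > 0" and t: "t \<ge> 1"
  shows "theta_Psi (c*t) \<le> theta_Psi c * exp (-pi*c*(t-1))"
proof -
  have "theta_Psi c * exp (-pi*c*(t-1)) = (\<Sum>n. exp (- pi * (real (Suc n))^2 * c) * exp (-pi*c*(t-1)))"
    unfolding theta_Psi_def by (rule suminf_mult2[OF Psi_summable[OF c]])
  moreover have "theta_Psi (c*t) \<le> (\<Sum>n. exp (- pi * (real (Suc n))^2 * c) * exp (-pi*c*(t-1)))"
    unfolding theta_Psi_def
  proof (rule suminf_le)
    show "summable (\<lambda>n. exp (- pi * (real (Suc n))^2 * (c*t)))"
      using c t by (intro Psi_summable) auto
    show "summable (\<lambda>n. exp (- pi * (real (Suc n))^2 * c) * exp (-pi*c*(t-1)))"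
      by (intro summable_mult2 Psi_summable c)
    fix n
    have "1 \<le> (real (Suc n))^2" by simp
    then have "pi*c*(t-1) * 1 \<le> pi*c*(t-1) * (real (Suc n))^2"
      using c t by (intro mult_left_mono) auto
    then have "- pi * (real (Suc n))^2 * (c*t) \<le> - pi * (real (Suc n))^2 * c + -pi*c*(t-1)"
      by (simp add: algebra_simps)
    then show "exp (- pi * (real (Suc n))^2 * (c*t)) \<le> exp (- pi * (real (Suc n))^2 * c) * exp (-pi*c*(t-1))"
      by (simp add: exp_add[symmetric])
  qed
  ultimately show ?thesis by simp
qed



definition Ui :: "nat \<Rightarrow> real \<Rightarrow> real \<Rightarrow> real" where
  "Ui k z s = exp (- z * s) * s powr (real (2*k+2) - 1) * (1 + s) powr (1/2 - real (2*k+2) - 1)"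

definition ww :: "nat \<Rightarrow> real \<Rightarrow> real" where
  "ww k t = (t - 1) ^ (2*k+1) / (1 + t) powr (real (2*k) + 5/2)"

lemma strict_integral:
  fixes X Y :: "real \<Rightarrow> real"
  assumes iX: "integrable lborel X" and iY: "integrable lborel Y"
    and le: "\<And>x. X x \<le> Y x" and lt: "\<And>x. x \<in> {a<..b} \<Longrightarrow> X x < Y x" and ab: "a < b"
  shows "integral\<^sup>L lborel X < integral\<^sup>L lborel Y"
proof -
  have "integral\<^sup>L lborel X \<le> integral\<^sup>L lborel Y"
    using iX iY le by (intro integral_mono) auto
  moreover have "integral\<^sup>L lborel X \<noteq> integral\<^sup>L lborel Y"
  proof
    assume eq: "integral\<^sup>L lborel X = integral\<^sup>L lborel Y"
    have i: "integrable lborel (\<lambda>x. Y x - X x)" using iX iY by auto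
    have "integral\<^sup>L lborel (\<lambda>x. Y x - X x) = 0"
      using eq iX iY by (simp add: Bochner_Integration.integral_diff)
    then have "AE x in lborel. Y x - X x = 0"
      using integral_nonneg_eq_0_iff_AE[OF i] le by auto
    then have "AE x in lborel. x \<notin> {a<..b}"
      by eventually_elim (use lt in force)
    then have "{a<..b} \<in> null_sets lborel"
      by (subst AE_iff_null_sets) auto
    then show False using ab by (simp add: null_sets_def)
  qed
  ultimately show ?thesis by simp
qed

lemma Ui_pos: "z > 0 \<Longrightarrow> s > 0 \<Longrightarrow> Ui k z s > 0"
  unfolding Ui_def by auto

lemma Ui_int:
  assumes z: "z > 0"
  shows "set_integrable lborel {0<..} (Ui k z)"
  unfolding set_integrable_def
proof (rule Bochner_Integration.integrable_bound)
  have "(\<lambda>x. exp (- z * x)) absolutely_integrable_on {0..}"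
    using z by (intro nonnegative_absolutely_integrable_1 integrable_on_exp_minus_to_infinity) auto
  then have "integrable lebesgue (\<lambda>x. indicator {0..} x *\<^sub>R exp (- z * x))"
    unfolding set_integrable_def .
  then show "integrable lborel (\<lambda>x. indicator {0..} x *\<^sub>R exp (- z * x))"
    by (subst (asm) integrable_completion) auto
  show "(\<lambda>x. indicator {0<..} x *\<^sub>R Ui k z x) \<in> borel_measurable lborel"
    unfolding Ui_def by measurable
  show "AE x in lborel. norm (indicator {0<..} x *\<^sub>R Ui k z x) \<le> norm (indicator {0..} x *\<^sub>R exp (- z * x))"
  proof (rule AE_I2)
    fix x :: real
    show "norm (indicator {0<..} x *\<^sub>R Ui k z x) \<le> norm (indicator {0..} x *\<^sub>R exp (- z * x))"
    proof (cases "x > 0")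
      case True
      have "x powr (real (2*k+2) - 1) \<le> (1+x) powr (real (2*k+2) - 1)"
        using True by (intro powr_mono2) auto
      then have "x powr (real (2*k+2) - 1) * (1 + x) powr (1/2 - real (2*k+2) - 1)
          \<le> (1+x) powr (real (2*k+2) - 1) * (1 + x) powr (1/2 - real (2*k+2) - 1)"
        by (intro mult_right_mono) auto
      also have "\<dots> = (1+x) powr (-3/2)"
        by (simp add: powr_add[symmetric])
      also have "\<dots> \<le> (1+x) powr 0" using True by (intro powr_mono) auto
      also have "\<dots> = 1" using True by simp
      finally have "x powr (real (2*k+2) - 1) * (1 + x) powr (1/2 - real (2*k+2) - 1) \<le> 1" .
      then have "exp (- z * x) * (x powr (real (2*k+2) - 1) * (1 + x) powr (1/2 - real (2*k+2) - 1)) \<le> exp (- z * x) * 1"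
        by (intro mult_left_mono) auto
      then show ?thesis using True Ui_pos[OF z True, of k] unfolding Ui_def
        by (simp add: mult.assoc)
    qed auto
  qed
qed

lemma Ui_int_pos:
  assumes z: "z > 0"
  shows "(LBINT s:{0<..}. Ui k z s) > 0"
proof -
  have "integral\<^sup>L lborel (\<lambda>x::real. 0) < integral\<^sup>L lborel (\<lambda>x. indicator {0<..} x *\<^sub>R Ui k z x)"
  proof (rule strict_integral)
    show "integrable lborel (\<lambda>x. indicator {0<..} x *\<^sub>R Ui k z x)"
      using Ui_int[OF z, of k] by (simp add: set_integrable_def)
    show "(0::real) < 1" by simp
    fix x :: real
    show "0 \<le> indicator {0<..} x *\<^sub>R Ui k z x"
      using Ui_pos[OF z, of x k] by (auto simp: indicator_def less_imp_le)
    assume "x \<in> {0<..1}"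
    then show "0 < indicator {0<..} x *\<^sub>R Ui k z x"
      using Ui_pos[OF z, of x k] by (auto simp: indicator_def)
  qed simp
  then show ?thesis by (simp add: set_lebesgue_integral_def)
qed



lemma pointwise_subst:
  assumes c: "c > 0"
  shows "indicator {1..} (1 + 2*x) *\<^sub>R (exp (-pi*c*((1 + 2*x)-1)) * ww k (1 + 2*x))
       = (1 / (2 * sqrt 2)) * (indicator {0<..} x *\<^sub>R Ui k (2*pi*c) x)"
proof (cases "x > 0")
  case True
  have e1: "(1 + (1 + 2*x)) powr (real (2*k) + 5/2) = 2^(2*k+2) * sqrt 2 * (1+x) powr (real (2*k) + 5/2)"
  proof -
    have "(1 + (1 + 2*x)) powr (real (2*k) + 5/2) = 2 powr (real (2*k) + 5/2) * (1+x) powr (real (2*k) + 5/2)"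
      using True by (subst powr_mult[symmetric]) (auto simp: algebra_simps)
    moreover have "(2::real) powr (real (2*k) + 5/2) = 2^(2*k+2) * sqrt 2"
    proof -
      have "(2::real) powr (real (2*k) + 5/2) = 2 powr (real (2*k+2)) * 2 powr (1/2)"
        by (subst powr_add[symmetric]) (simp add: algebra_simps)
      also have "\<dots> = 2^(2*k+2) * sqrt 2"
      proof -
        have "(2::real) powr real (2*k+2) = 2^(2*k+2)" by (rule powr_realpow) simp
        moreover have "(2::real) powr (1/2) = sqrt 2" by (rule powr_half_sqrt) simp
        ultimately show ?thesis by (simp only:)
      qed
      finally show ?thesis .
    qed
    ultimately show ?thesis by simp
  qed
  have e2: "x powr (real (2*k+2) - 1) = x^(2*k+1)"
  proof -
    have "real (2*k+2) - 1 = real (2*k+1)" by simp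
    then show ?thesis using True by (simp only: powr_realpow)
  qed
  have e3: "(1 + x) powr (1/2 - real (2*k+2) - 1) = 1 / (1+x) powr (real (2*k) + 5/2)"
  proof -
    have "(1::real)/2 - real (2*k+2) - 1 = - (real (2*k) + 5/2)" by simp
    then show ?thesis by (simp only: powr_minus_divide)
  qed
  have e4: "(1 + 2*x - 1)^(2*k+1) = 2^(2*k+1) * x^(2*k+1)" by (simp add: power_mult_distrib)
  have e5: "(2::real)^(2*k+2) = 2 * 2^(2*k+1)" by simp
  have fld: "A * (q * X / (2 * q * s * P)) = 1 / (2 * s) * (A * X * (1 / P))"
    if "q \<noteq> 0" "s \<noteq> 0" "P \<noteq> 0" for A q X s P :: real
  proof -
    have "A * (q * X / (2 * q * s * P)) = A * X * (q / q) / (2 * s * P)" by (simp add: ac_simps)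
    also have "\<dots> = A * X / (2 * s * P)" using that by simp
    also have "\<dots> = 1 / (2 * s) * (A * X * (1 / P))" by simp
    finally show ?thesis .
  qed
  have ind: "indicator {1..} (1 + 2*x) = (1::real)" "indicator {0<..} x = (1::real)"
    using True by (auto simp: indicator_def)
  have ex: "exp (-pi*c*((1 + 2*x)-1)) = exp (- (2*pi*c) * x)" by (simp add: algebra_simps)
  show ?thesis
    unfolding ww_def Ui_def e1 e2 e3 ind ex e4 e5 scaleR_one
    by (rule fld) (use True in auto)
next
  case False
  then show ?thesis by (auto simp: indicator_def ww_def)
qed

lemma subst_int:
  assumes c: "c > 0"
  shows "set_integrable lborel {1..} (\<lambda>t. exp (-pi*c*(t-1)) * ww k t)"
    and "(LBINT t:{1..}. exp (-pi*c*(t-1)) * ww k t) = (1 / sqrt 2) * (LBINT s:{0<..}. Ui k (2*pi*c) s)"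
proof -
  define f where "f t = indicator {1..} t *\<^sub>R (exp (-pi*c*(t-1)) * ww k t)" for t :: real
  have fe: "f (1 + 2*x) = (1 / (2 * sqrt 2)) * (indicator {0<..} x *\<^sub>R Ui k (2*pi*c) x)" for x
    unfolding f_def by (rule pointwise_subst[OF c])
  have iU: "integrable lborel (\<lambda>x. indicator {0<..} x *\<^sub>R Ui k (2*pi*c) x)"
    using Ui_int[of "2*pi*c" k] c by (simp add: set_integrable_def)
  have "integrable lborel (\<lambda>x. f (1 + 2*x))"
    unfolding fe using iU by simp
  then have i: "integrable lborel f"
    using lborel_integrable_real_affine_iff[of 2 f 1] by simp
  then show "set_integrable lborel {1..} (\<lambda>t. exp (-pi*c*(t-1)) * ww k t)"
    unfolding set_integrable_def f_def .
  have "integral\<^sup>L lborel f = \<bar>2\<bar> *\<^sub>R integral\<^sup>L lborel (\<lambda>x. f (1 + 2*x))"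
    by (rule lborel_integral_real_affine) simp
  also have "\<dots> = 2 * ((1 / (2 * sqrt 2)) * integral\<^sup>L lborel (\<lambda>x. indicator {0<..} x *\<^sub>R Ui k (2*pi*c) x))"
    unfolding fe by simp
  also have "\<dots> = (1 / sqrt 2) * (LBINT s:{0<..}. Ui k (2*pi*c) s)"
    by (simp add: set_lebesgue_integral_def)
  finally show "(LBINT t:{1..}. exp (-pi*c*(t-1)) * ww k t) = (1 / sqrt 2) * (LBINT s:{0<..}. Ui k (2*pi*c) s)"
    unfolding f_def set_lebesgue_integral_def .
qed



lemma absdiff_lt: "p > 0 \<Longrightarrow> q > 0 \<Longrightarrow> s > 0 \<Longrightarrow> \<bar>s * p - q\<bar> < s * p + (q::real)"
  by (auto simp: abs_if)

lemma alg1: "(m::real) * f / d * (x1 * P * (I / f) + x2 * Q * (J / f)) = f / d * ((m*x1) * P * (I/f) + (m*x2) * Q * (J/f))"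
  by (simp add: algebra_simps)

lemma alg2: "(f::real) > 0 \<Longrightarrow> f / d * (u * P * (I / f) + w * Q * (J / f)) = 1 / d * (u * P * I + w * Q * J)"
  by (cases "d = 0") (simp_all add: field_simps)

lemma alg3: "(s::real) > 0 \<Longrightarrow> r > 0 \<Longrightarrow> p > 0 \<Longrightarrow> a = s * s \<Longrightarrow> 1 / (4 * r * p) * (1 / s * P * I + 1 / a * Q * J)
   = 1 / (4 * p * a) * (s * P * ((1 / r) * I) + Q * ((1 / r) * J))"
  by (simp add: field_simps)

theorem theorem4:
  fixes a :: real and k :: nat
  assumes "a > 0"
  shows "\<bar>eps_odd k a\<bar> < B_odd k a"
proof -
  have a: "a > 0" by fact
  define F where "F t = (sqrt a * theta_Psi (a * t) - theta_Psi (t / a)) * ww k t" for t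
  define gA where "gA t = exp (-pi*a*(t-1)) * ww k t" for t
  define gB where "gB t = exp (-pi*(1/a)*(t-1)) * ww k t" for t
  define Pa where "Pa = theta_Psi a"
  define Pb where "Pb = theta_Psi (1/a)"
  define Ia where "Ia = (LBINT s:{0<..}. Ui k (2*pi*a) s)"
  define Ib where "Ib = (LBINT s:{0<..}. Ui k (2*pi*(1/a)) s)"
  have Pa: "Pa > 0" unfolding Pa_def using a by (rule Psi_pos)
  have Pb: "Pb > 0" unfolding Pb_def using a by (intro Psi_pos) auto
  have Ia: "Ia > 0" unfolding Ia_def using a by (intro Ui_int_pos) auto
  have Ib: "Ib > 0" unfolding Ib_def using a by (intro Ui_int_pos) auto
  have iA: "integrable lborel (\<lambda>t. indicator {1..} t *\<^sub>R gA t)"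
    and vA: "integral\<^sup>L lborel (\<lambda>t. indicator {1..} t *\<^sub>R gA t) = (1 / sqrt 2) * Ia"
    using subst_int[of a k] a unfolding gA_def Ia_def set_integrable_def set_lebesgue_integral_def
    by auto
  have iB: "integrable lborel (\<lambda>t. indicator {1..} t *\<^sub>R gB t)"
    and vB: "integral\<^sup>L lborel (\<lambda>t. indicator {1..} t *\<^sub>R gB t) = (1 / sqrt 2) * Ib"
    using subst_int[of "1/a" k] a unfolding gB_def Ib_def set_integrable_def set_lebesgue_integral_def
    by auto
  define G where "G t = sqrt a * Pa * (indicator {1..} t *\<^sub>R gA t) + Pb * (indicator {1..} t *\<^sub>R gB t)" for t
  have iG: "integrable lborel G" unfolding G_def using iA iB by auto
  have vG: "integral\<^sup>L lborel G = sqrt a * Pa * ((1 / sqrt 2) * Ia) + Pb * ((1 / sqrt 2) * Ib)"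
    unfolding G_def using iA iB vA vB by simp
  have gam: "Gamma (real (2*k+2)) = fact (2*k+1)"
  proof -
    have "real (2*k+2) = 1 + real (2*k+1)" by simp
    then show ?thesis using Gamma_fact[of "2*k+1"] by simp
  qed
  have tUa: "tricomiU (real (2*k+2)) (1/2) (2*pi*a) = Ia / fact (2*k+1)"
    unfolding tricomiU_def Ia_def Ui_def gam by simp
  have tUb: "tricomiU (real (2*k+2)) (1/2) (2*pi*(1/a)) = Ib / fact (2*k+1)"
    unfolding tricomiU_def Ib_def Ui_def gam by simp
  have p1: "a powr (-3/4) * a powr (1/4) = 1 / sqrt a"
  proof -
    have "a powr (-3/4) * a powr (1/4) = a powr (- (1/2))" by (simp add: powr_add[symmetric])
    also have "\<dots> = 1 / a powr (1/2)" by (rule powr_minus_divide)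
    also have "\<dots> = 1 / sqrt a" using a by (simp add: powr_half_sqrt)
    finally show ?thesis .
  qed
  have p2: "a powr (-3/4) * (1/a) powr (1/4) = 1 / a"
  proof -
    have "(1/a) powr (1/4) = 1 / a powr (1/4)" using a by (simp add: powr_divide)
    then have "a powr (-3/4) * (1/a) powr (1/4) = a powr (-3/4) / a powr (1/4)" by simp
    also have "\<dots> = a powr (-3/4 - 1/4)" by (rule powr_diff[symmetric])
    also have "\<dots> = a powr (- 1)" by simp
    also have "\<dots> = 1 / a" using a by (simp add: powr_minus_divide)
    finally show ?thesis .
  qed
  have fpos: "(fact (2*k+1) :: real) > 0" by simp
  have sa: "sqrt a > 0" using a by simp
  have Bv: "B_odd k a = 1 / (4*pi*a) * (sqrt a * Pa * ((1 / sqrt 2) * Ia) + Pb * ((1 / sqrt 2) * Ib))"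
  proof -
    have "B_odd k a = fact (2*k+1) / (4 * sqrt 2 * pi) *
        ((a powr (-3/4) * a powr (1/4)) * Pa * (Ia / fact (2*k+1)) + (a powr (-3/4) * (1/a) powr (1/4)) * Pb * (Ib / fact (2*k+1)))"
      unfolding B_odd_def E_odd_def tUa tUb Pa_def Pb_def by (rule alg1)
    also have "\<dots> = 1 / (4 * sqrt 2 * pi) * (1 / sqrt a * Pa * Ia + 1 / a * Pb * Ib)"
      unfolding p1 p2 using fpos by (rule alg2)
    also have "\<dots> = 1 / (4*pi*a) * (sqrt a * Pa * ((1 / sqrt 2) * Ia) + Pb * ((1 / sqrt 2) * Ib))"
    proof -
      have aa: "a = sqrt a * sqrt a" using a by simp
      show ?thesis
        using sa aa by (intro alg3) auto
    qed
    finally show ?thesis .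
  qed
  have ww_nonneg: "ww k t \<ge> 0" if "t \<ge> 1" for t
    using that unfolding ww_def by auto
  have ww_pos: "ww k t > 0" if "t > 1" for t
    using that unfolding ww_def by auto
  have bound: "\<bar>sqrt a * theta_Psi (a * t) - theta_Psi (t / a)\<bar> \<le> sqrt a * Pa * exp (-pi*a*(t-1)) + Pb * exp (-pi*(1/a)*(t-1))"
    and sbound: "\<bar>sqrt a * theta_Psi (a * t) - theta_Psi (t / a)\<bar> < sqrt a * Pa * exp (-pi*a*(t-1)) + Pb * exp (-pi*(1/a)*(t-1))"
    if "t \<ge> 1" for t
  proof -
    have q1: "theta_Psi (a * t) \<le> Pa * exp (-pi*a*(t-1))" unfolding Pa_def using Psi_bound[OF a that] .
    have q2: "theta_Psi (t / a) \<le> Pb * exp (-pi*(1/a)*(t-1))" unfolding Pb_def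
      using Psi_bound[of "1/a" t] a that by simp
    have r1: "theta_Psi (a * t) > 0" using a that by (intro Psi_pos) auto
    have r2: "theta_Psi (t / a) > 0" using a that by (intro Psi_pos) auto
    have "\<bar>sqrt a * theta_Psi (a * t) - theta_Psi (t / a)\<bar> < sqrt a * theta_Psi (a * t) + theta_Psi (t / a)"
      using r1 r2 sa by (rule absdiff_lt)
    also have "\<dots> \<le> sqrt a * Pa * exp (-pi*a*(t-1)) + Pb * exp (-pi*(1/a)*(t-1))"
      using q1 q2 sa by (simp add: mult.assoc mult_left_mono add_mono)
    finally show "\<bar>sqrt a * theta_Psi (a * t) - theta_Psi (t / a)\<bar> < sqrt a * Pa * exp (-pi*a*(t-1)) + Pb * exp (-pi*(1/a)*(t-1))" .
    then show "\<bar>sqrt a * theta_Psi (a * t) - theta_Psi (t / a)\<bar> \<le> sqrt a * Pa * exp (-pi*a*(t-1)) + Pb * exp (-pi*(1/a)*(t-1))"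
      by simp
  qed
  have Gt: "G t = indicator {1..} t * ((sqrt a * Pa * exp (-pi*a*(t-1)) + Pb * exp (-pi*(1/a)*(t-1))) * ww k t)" for t
    unfolding G_def gA_def gB_def by (simp add: algebra_simps)
  have le: "\<bar>indicator {1..} t *\<^sub>R F t\<bar> \<le> G t" for t
  proof (cases "t \<ge> 1")
    case True
    have "\<bar>F t\<bar> = \<bar>sqrt a * theta_Psi (a * t) - theta_Psi (t / a)\<bar> * ww k t"
      unfolding F_def using ww_nonneg[OF True] by (simp add: abs_mult)
    also have "\<dots> \<le> (sqrt a * Pa * exp (-pi*a*(t-1)) + Pb * exp (-pi*(1/a)*(t-1))) * ww k t"
      using bound[OF True] ww_nonneg[OF True] by (rule mult_right_mono)
    finally show ?thesis unfolding Gt using True by simp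
  qed (simp add: Gt)
  have lt: "\<bar>indicator {1..} t *\<^sub>R F t\<bar> < G t" if "t \<in> {1<..2}" for t
  proof -
    have t1: "t \<ge> 1" "t > 1" using that by auto
    have "\<bar>F t\<bar> = \<bar>sqrt a * theta_Psi (a * t) - theta_Psi (t / a)\<bar> * ww k t"
      unfolding F_def using ww_nonneg[OF t1(1)] by (simp add: abs_mult)
    also have "\<dots> < (sqrt a * Pa * exp (-pi*a*(t-1)) + Pb * exp (-pi*(1/a)*(t-1))) * ww k t"
      using sbound[OF t1(1)] ww_pos[OF t1(2)] by (rule mult_strict_right_mono)
    finally show ?thesis unfolding Gt using t1 by simp
  qed
  have eps: "eps_odd k a = 1 / (4*pi*a) * integral\<^sup>L lborel (\<lambda>t. indicator {1..} t *\<^sub>R F t)"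
    unfolding eps_odd_def F_def ww_def set_lebesgue_integral_def by simp
  have c4: "1 / (4*pi*a) > 0" using a by simp
  show ?thesis
  proof (cases "integrable lborel (\<lambda>t. indicator {1..} t *\<^sub>R F t)")
    case True
    have "\<bar>integral\<^sup>L lborel (\<lambda>t. indicator {1..} t *\<^sub>R F t)\<bar>
        \<le> integral\<^sup>L lborel (\<lambda>t. \<bar>indicator {1..} t *\<^sub>R F t\<bar>)"
      using integral_norm_bound[of lborel "\<lambda>t. indicator {1..} t *\<^sub>R F t"] by simp
    also have "\<dots> < integral\<^sup>L lborel G"
      using True iG le lt by (intro strict_integral[where a=1 and b=2]) auto
    finally have "\<bar>eps_odd k a\<bar> < 1 / (4*pi*a) * integral\<^sup>L lborel G"
      unfolding eps using c4 a by (simp add: abs_mult divide_strict_right_mono)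
    then show ?thesis unfolding Bv vG .
  next
    case False
    then have "eps_odd k a = 0" unfolding eps by (simp add: not_integrable_integral_eq)
    moreover have "B_odd k a > 0" unfolding Bv using Pa Pb Ia Ib sa c4 a
      by (intro mult_pos_pos add_pos_pos) auto
    ultimately show ?thesis by simp
  qed
qed

end
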